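(* There exists a Bernstein set $B\subseteq\mathbb R^2$ which is not a $3$-I-covering.
   Context: A set $B\subseteq\mathbb R^2$ is a Bernstein set if for every uncountable Borel $Z\subseteq\mathbb R^2$ both $Z\cap B$ and $Z\setminus B$ are nonempty. A set $A\subseteq\mathbb R^2$ is a $3$-I-covering if for every $C\subseteq\mathbb R^2$ with $|C|=3$ there is an isometry $\phi$ of the Euclidean plane with $\phi[C]\subseteq A$. *)

theory Defs
  imports "HOL-Analysis.Analysis"
begin

definition plane_isometry :: "(real^2 \<Rightarrow> real^2) \<Rightarrow> bool" where
  "plane_isometry \<phi> \<longleftrightarrow> bij \<phi> \<and> (\<forall>x y. dist (\<phi> x) (\<phi> y) = dist x y)"

definition bernstein_set :: "(real^2) set \<Rightarrow> bool" where
  "bernstein_set B \<longleftrightarrow>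
     (\<forall>Z. Z \<in> sets borel \<and> uncountable Z \<longrightarrow> Z \<inter> B \<noteq> {} \<and> Z - B \<noteq> {})"

definition three_I_covering :: "(real^2) set \<Rightarrow> bool" where
  "three_I_covering A \<longleftrightarrow>
     (\<forall>C :: (real^2) set. card C = 3 \<longrightarrow> (\<exists>\<phi>. plane_isometry \<phi> \<and> \<phi> ` C \<subseteq> A))"

end

theory Submission
  imports Defs
begin

unbundle cardinal_syntax

type_synonym pt = "real^2"


type_synonym sq = "nat \<Rightarrow> real"

definition gr :: "(pt \<Rightarrow> sq) \<Rightarrow> (pt \<times> sq) set" where
  "gr g = range (\<lambda>x. (x, g x))"

definition opn :: "(pt \<Rightarrow> sq) \<Rightarrow> pt set \<Rightarrow> bool" where
  "opn g A \<longleftrightarrow> (\<exists>W. open W \<and> A = {x. (x, g x) \<in> W})"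

definition refg :: "(pt \<Rightarrow> sq) \<Rightarrow> (pt \<Rightarrow> sq) \<Rightarrow> bool" where
  "refg g' g \<longleftrightarrow> (\<exists>\<pi>. continuous_on UNIV \<pi> \<and> (\<forall>x. g x = \<pi> (g' x)))"

lemma cont_coord: "continuous_on UNIV (\<lambda>p::'a::topological_space \<times> sq. snd p i)"
  by (rule continuous_on_product_then_coordinatewise[OF continuous_on_snd[OF continuous_on_id]])

lemma refg_opn: assumes "refg g' g" "opn g A" shows "opn g' A"
proof -
  obtain \<pi> where p: "continuous_on UNIV \<pi>" "\<And>x. g x = \<pi> (g' x)" using assms(1) refg_def by metis
  obtain W where W: "open W" "A = {x. (x, g x) \<in> W}" using assms(2) opn_def by metis
  let ?f = "\<lambda>p::pt \<times> sq. (fst p, \<pi> (snd p))"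
  have c: "continuous_on UNIV ?f"
    by (rule continuous_on_Pair[OF continuous_on_fst continuous_on_compose2[OF p(1) continuous_on_snd]]) auto
  have "open (?f -` W)" using open_vimage[OF W(1) c] .
  moreover have "A = {x. (x, g' x) \<in> ?f -` W}" using W(2) p(2) by auto
  ultimately show ?thesis unfolding opn_def by blast
qed

lemma cont_shift: "continuous_on UNIV (\<lambda>y::sq. (\<lambda>n. y (f n)))"
  by (rule continuous_on_coordinatewise_then_product) (rule continuous_on_product_coordinates)

lemma refine:
  assumes g: "closed (gr g)" and W: "open W"
  shows "\<exists>g'. closed (gr g') \<and> refg g' g \<and> opn g' {x. (x, g x) \<in> W} \<and> opn g' (- {x. (x, g x) \<in> W})"
proof (cases "W = UNIV")
  case True
  have "refg g g" unfolding refg_def by (intro exI[of _ id]) auto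
  moreover have "opn g {x. (x, g x) \<in> W}" unfolding opn_def by (intro exI[of _ UNIV]) (auto simp: True)
  moreover have "opn g (- {x. (x, g x) \<in> W})" unfolding opn_def by (intro exI[of _ "{}"]) (auto simp: True)
  ultimately show ?thesis using g by blast
next
  case False
  define C where "C = - W"
  have C: "closed C" "C \<noteq> {}" using W False by (auto simp: C_def)
  define q :: "pt \<times> sq \<Rightarrow> pt \<times> sq" where "q p = (fst p, \<lambda>n. snd p (n+2))" for p
  define g' where "g' x = (\<lambda>n. if n = 0 then (if (x,g x)\<in>W then 1 else 0) else if n = 1 then (if (x,g x)\<in>W then 1 / infdist (x, g x) C else 0) else g x (n-2))" for x
  have qg': "q (x, g' x) = (x, g x)" for x
    by (auto simp: q_def g'_def)
  have cq: "continuous_on UNIV q"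
    unfolding q_def
    by (rule continuous_on_Pair[OF continuous_on_fst[OF continuous_on_id] continuous_on_coordinatewise_then_product]) (rule cont_coord)
  define S where "S = {p. q p \<in> gr g \<and> ((q p \<in> C \<and> snd p 0 = 0 \<and> snd p 1 = 0) \<or> (snd p 0 = 1 \<and> snd p 1 * infdist (q p) C = 1))}"
  have S_eq: "S = (q -` gr g) \<inter> ((q -` C \<inter> {p. snd p 0 = 0} \<inter> {p. snd p 1 = 0}) \<union> ({p. snd p 0 = 1} \<inter> {p. snd p 1 * infdist (q p) C = 1}))"
    unfolding S_def by auto
  have c0: "continuous_on UNIV (\<lambda>p::pt\<times>sq. snd p 0)" "continuous_on UNIV (\<lambda>p::pt\<times>sq. snd p 1)"
    by (rule cont_coord)+
  have c1: "continuous_on UNIV (\<lambda>p::pt\<times>sq. snd p 1 * infdist (q p) C)"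
    by (rule continuous_on_mult[OF c0(2) continuous_on_infdist[OF cq]])
  have "closed S"
    unfolding S_eq
    by (intro closed_Int closed_Un closed_vimage[OF _ cq] g C(1) closed_Collect_eq c0 c1 continuous_on_const)
  have "gr g' = S"
  proof
    show "gr g' \<subseteq> S"
    proof
      fix p assume "p \<in> gr g'"
      then obtain x where p: "p = (x, g' x)" by (auto simp: gr_def)
      have qp: "q p \<in> gr g" "q p = (x, g x)" by (auto simp: p qg' gr_def)
      show "p \<in> S"
      proof (cases "(x, g x) \<in> W")
        case True
        then have "(x, g x) \<notin> C" by (simp add: C_def)
        then have "infdist (x, g x) C > 0" using infdist_pos_not_in_closed[OF C] by blast
        then show ?thesis using True qp unfolding S_def by (simp add: p g'_def)
      next
        case False
        then show ?thesis using qp unfolding S_def by (simp add: p g'_def C_def)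
      qed
    qed
  next
    show "S \<subseteq> gr g'"
    proof
      fix p assume pS: "p \<in> S"
      obtain x y where p: "p = (x, y)" by fastforce
      from pS have "q p \<in> gr g" by (simp add: S_def)
      then have sh: "(\<lambda>n. y (n+2)) = g x" by (auto simp: gr_def q_def p)
      have gy: "g x m = y (m+2)" for m using fun_cong[OF sh, of m] by simp
      have gy2: "y n = g x (n - 2)" if "n \<noteq> 0" "n \<noteq> 1" for n
      proof -
        have "n - 2 + 2 = n" using that by arith
        then show ?thesis using gy[of "n-2"] by simp
      qed
      have qp2: "q (x, y) = (x, g x)" using sh by (simp add: q_def)
      from pS have pS': "((x, g x) \<in> C \<and> y 0 = 0 \<and> y 1 = 0) \<or> (y 0 = 1 \<and> y 1 * infdist (x, g x) C = 1)"
        by (simp add: S_def p qp2)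
      have "y = g' x"
      proof (cases "(x, g x) \<in> W")
        case True
        then have "(x, g x) \<notin> C" by (simp add: C_def)
        with pS' have y01: "y 0 = 1" "y 1 * infdist (x, g x) C = 1"
          by auto
        then have "infdist (x, g x) C \<noteq> 0" by auto
        then have "y 1 = 1 / infdist (x, g x) C" using y01 by (simp add: field_simps)
        then show ?thesis using True y01 gy2
          by (intro ext) (auto simp: g'_def)
      next
        case False
        then have "(x, g x) \<in> C" by (simp add: C_def)
        with pS' have y01: "y 0 = 0" "y 1 = 0"
          by auto
        then show ?thesis using False gy2
          by (intro ext) (auto simp: g'_def)
      qed
      then show "p \<in> gr g'" by (simp add: p gr_def)
    qed
  qed
  have "refg g' g"
    unfolding refg_def
  proof (intro exI conjI allI)
    show "continuous_on UNIV (\<lambda>y::sq. (\<lambda>n. y (n+2)))" by (rule cont_shift)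
    fix x show "g x = (\<lambda>n. g' x (n+2))" by (auto simp: g'_def)
  qed
  moreover have "opn g' {x. (x, g x) \<in> W}"
    unfolding opn_def
    by (intro exI[of _ "{p. 1/2 < snd p 0}"] conjI open_Collect_less continuous_on_const c0) (auto simp: g'_def)
  moreover have "opn g' (- {x. (x, g x) \<in> W})"
    unfolding opn_def
    by (intro exI[of _ "{p. snd p 0 < 1/2}"] conjI open_Collect_less continuous_on_const c0) (auto simp: g'_def)
  ultimately show ?thesis using \<open>closed S\<close> \<open>gr g' = S\<close> by (intro exI[of _ g']) simp
qed

definition good :: "pt set \<Rightarrow> bool" where
  "good A \<longleftrightarrow> (\<exists>g. closed (gr g) \<and> opn g A \<and> opn g (- A))"

lemma gr_const: "closed (gr (\<lambda>x n. 0))"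
proof -
  have "gr (\<lambda>x n. 0) = UNIV \<times> {\<lambda>n. 0}" by (auto simp: gr_def)
  then show ?thesis by (simp add: closed_Times)
qed

lemma good_open: assumes "open A" shows "good A"
proof -
  have "open (A \<times> (UNIV::sq set))" using assms by (simp add: open_Times)
  from refine[OF gr_const this] obtain g' where
    "closed (gr g')" "opn g' {x. (x, (\<lambda>n. 0::real)) \<in> A \<times> (UNIV::sq set)}"
    "opn g' (- {x. (x, (\<lambda>n. 0::real)) \<in> A \<times> (UNIV::sq set)})" by blast
  moreover have "{x. (x, (\<lambda>n. 0::real)) \<in> A \<times> (UNIV::sq set)} = A" by auto
  ultimately show ?thesis unfolding good_def by metis
qed

lemma good_empty: "good {}"
proof -
  have "opn (\<lambda>x n. 0) {}" unfolding opn_def by (intro exI[of _ "{}"]) auto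
  moreover have "opn (\<lambda>x n. 0) (- {})" unfolding opn_def by (intro exI[of _ UNIV]) auto
  ultimately show ?thesis using gr_const unfolding good_def by blast
qed

lemma good_compl: "good A \<Longrightarrow> good (UNIV - A)"
  unfolding good_def by (auto simp: Compl_eq_Diff_UNIV[symmetric])

lemma good_Union:
  assumes "\<And>i::nat. good (A i)"
  shows "good (\<Union> (range A))"
proof -
  have "\<forall>i. \<exists>g. closed (gr g) \<and> opn g (A i)" using assms unfolding good_def by blast
  then have "\<exists>gs. \<forall>i. closed (gr (gs i)) \<and> opn (gs i) (A i)" by (rule choice)
  then obtain gs where gs0: "\<forall>i. closed (gr (gs i)) \<and> opn (gs i) (A i)" by blast
  have gs: "\<And>i. closed (gr (gs i))" "\<And>i. opn (gs i) (A i)" using gs0 by auto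
  define g where "g x = (\<lambda>k. gs (fst (prod_decode k)) x (snd (prod_decode k)))" for x
  define \<pi> where "\<pi> m = (\<lambda>y::sq. \<lambda>j. y (prod_encode (m, j)))" for m
  have c\<pi>: "continuous_on UNIV (\<pi> m)" for m unfolding \<pi>_def by (rule cont_shift)
  have g\<pi>: "gs m x = \<pi> m (g x)" for m x by (simp add: \<pi>_def g_def)
  have ref: "refg g (gs m)" for m unfolding refg_def using c\<pi> g\<pi> by blast
  have cc: "continuous_on UNIV (\<lambda>p::pt\<times>sq. (fst p, \<pi> m (snd p)))" for m
    by (rule continuous_on_Pair[OF continuous_on_fst[OF continuous_on_id] continuous_on_compose2[OF c\<pi> continuous_on_snd[OF continuous_on_id]]]) auto
  have "gr g = (\<Inter>m. (\<lambda>p. (fst p, \<pi> m (snd p))) -` gr (gs m))"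
  proof
    show "gr g \<subseteq> (\<Inter>m. (\<lambda>p. (fst p, \<pi> m (snd p))) -` gr (gs m))"
      by (auto simp: gr_def g\<pi>)
  next
    show "(\<Inter>m. (\<lambda>p. (fst p, \<pi> m (snd p))) -` gr (gs m)) \<subseteq> gr g"
    proof
      fix p assume p: "p \<in> (\<Inter>m. (\<lambda>p. (fst p, \<pi> m (snd p))) -` gr (gs m))"
      obtain x y where pxy: "p = (x, y)" by fastforce
      have pm: "\<pi> m y = gs m x" for m using p by (auto simp: pxy gr_def)
      have "y k = g x k" for k
        using fun_cong[OF pm[of "fst (prod_decode k)"], of "snd (prod_decode k)"]
        by (simp add: \<pi>_def g_def)
      then have "y = g x" by auto
      then show "p \<in> gr g" by (simp add: pxy gr_def)
    qed
  qed
  moreover have "closed (\<Inter>m. (\<lambda>p. (fst p, \<pi> m (snd p))) -` gr (gs m))"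
    by (rule closed_INT) (blast intro: closed_vimage[OF gs(1) cc])
  ultimately have cg: "closed (gr g)" by simp
  have "opn g (A m)" for m using refg_opn[OF ref gs(2)] .
  then have "\<forall>m. \<exists>W. open W \<and> A m = {x. (x, g x) \<in> W}" unfolding opn_def by blast
  then have "\<exists>Ws. \<forall>m. open (Ws m) \<and> A m = {x. (x, g x) \<in> Ws m}" by (rule choice)
  then obtain Ws where Ws0: "\<forall>m. open (Ws m) \<and> A m = {x. (x, g x) \<in> Ws m}" by blast
  have Ws: "\<And>m. open (Ws m)" "\<And>m. A m = {x. (x, g x) \<in> Ws m}" using Ws0 by auto
  have oW: "open (\<Union> (range Ws))" using Ws(1) by blast
  have eq: "\<Union> (range A) = {x. (x, g x) \<in> \<Union> (range Ws)}" using Ws(2) by auto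
  from refine[OF cg oW] show ?thesis unfolding good_def eq by blast
qed

lemma good_borel:
  assumes "(A::pt set) \<in> sets borel" shows "good A"
proof -
  have "A \<in> sigma_sets UNIV {S. open S}" using assms by (simp add: sets_borel)
  then show ?thesis
  proof induct
    case (Basic a) then show ?case by (simp add: good_open)
  next
    case Empty then show ?case by (rule good_empty)
  next
    case (Compl a) then show ?case by (simp add: good_compl)
  next
    case (Union a) then show ?case by (simp add: good_Union)
  qed
qed



lemma perfect_sub:
  fixes S :: "'a::{complete_space, second_countable_topology} set"
  assumes S: "closed S" "uncountable S"
  shows "\<exists>P \<subseteq> S. closed P \<and> (UNIV::real set) \<lesssim> P"
proof -
  define K where "K = {p \<in> S. \<forall>e>0. uncountable (S \<inter> ball p e)}"
  obtain BB :: "'a set set" where BB: "countable BB" "topological_basis BB"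
    using ex_countable_basis by blast
  have "S - K \<subseteq> (\<Union>b\<in>{b\<in>BB. countable (S \<inter> b)}. S \<inter> b)"
  proof
    fix p assume p: "p \<in> S - K"
    then obtain e where e: "e > 0" "countable (S \<inter> ball p e)" by (auto simp: K_def)
    obtain b where b: "b \<in> BB" "p \<in> b" "b \<subseteq> ball p e"
      using topological_basisE[OF BB(2) open_ball centre_in_ball[THEN iffD2, OF e(1)]] by metis
    have "countable (S \<inter> b)" using e(2) b(3) countable_subset by (metis Int_mono order_refl)
    then show "p \<in> (\<Union>b\<in>{b\<in>BB. countable (S \<inter> b)}. S \<inter> b)" using b p by blast
  qed
  moreover have "countable ((\<Union>b\<in>{b\<in>BB. countable (S \<inter> b)}. S \<inter> b))"
    using BB(1) by (intro countable_UN) auto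
  ultimately have cSK: "countable (S - K)" using countable_subset by blast
  have KS: "K \<subseteq> S" by (auto simp: K_def)
  have "K \<noteq> {}"
  proof
    assume "K = {}" then have "S - K = S" by simp
    then show False using cSK S(2) by simp
  qed
  have "open (- K)"
    unfolding open_contains_ball
  proof
    fix p assume "p \<in> - K"
    show "\<exists>e>0. ball p e \<subseteq> - K"
    proof (cases "p \<in> S")
      case False
      then obtain e where "e > 0" "ball p e \<subseteq> - S"
        using S(1) open_contains_ball[of "- S"] by (auto simp: closed_def)
      then show ?thesis using KS by blast
    next
      case True
      with \<open>p \<in> - K\<close> obtain e where e: "e > 0" "countable (S \<inter> ball p e)" by (auto simp: K_def)
      have "ball p e \<subseteq> - K"
      proof
        fix q assume q: "q \<in> ball p e"
        define e' where "e' = e - dist p q"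
        have "e' > 0" using q by (simp add: e'_def)
        moreover have "ball q e' \<subseteq> ball p e"
        proof
          fix y assume "y \<in> ball q e'"
          then have "dist q y < e - dist p q" by (simp add: e'_def)
          then show "y \<in> ball p e" using dist_triangle[of p y q] by simp
        qed
        then have "countable (S \<inter> ball q e')" using e(2) countable_subset by (metis Int_mono order_refl)
        ultimately show "q \<in> - K" by (auto simp: K_def)
      qed
      then show ?thesis using e(1) by blast
    qed
  qed
  then have cK: "closed K" by (simp add: closed_def)
  have der: "Met_TC.mtopology derived_set_of K = K"
  proof
    show "Met_TC.mtopology derived_set_of K \<subseteq> K"
      using cK closedin_contains_derived_set[of Met_TC.mtopology K] by simp
  next
    show "K \<subseteq> Met_TC.mtopology derived_set_of K"
    proof
      fix p assume pK: "p \<in> K"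
      show "p \<in> Met_TC.mtopology derived_set_of K"
        unfolding derived_set_of_def
      proof (simp, intro allI impI)
        fix T assume T: "p \<in> T \<and> open T"
        then obtain e where e: "e > 0" "ball p e \<subseteq> T" using open_contains_ball by blast
        have u: "uncountable (S \<inter> ball p e)" using pK e(1) by (auto simp: K_def)
        have "countable ((S - K) \<union> {p})" using cSK by simp
        then have "uncountable ((S \<inter> ball p e) - ((S - K) \<union> {p}))"
          by (rule uncountable_minus_countable[OF u])
        then have "(S \<inter> ball p e) - ((S - K) \<union> {p}) \<noteq> {}" by (metis countable_empty)
        then obtain y where "y \<in> (S \<inter> ball p e) - ((S - K) \<union> {p})" by blast
        then show "\<exists>y. y \<noteq> p \<and> y \<in> K \<and> y \<in> T" using e(2) by blast
      qed
    qed
  qed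
  have "Met_TC.mcomplete TYPE('a)" by (simp add: complete_UNIV)
  from Met_TC.lepoll_perfect_set[OF this der \<open>K \<noteq> {}\<close>]
  have "(UNIV::real set) \<lesssim> K" .
  then show ?thesis using KS cK by blast
qed



lemma closed_sets_lepoll:
  "{P::'a::second_countable_topology set. closed P} \<lesssim> (UNIV::real set)"
proof -
  obtain BB :: "'a set set" where BB: "countable BB" "topological_basis BB"
    using ex_countable_basis by blast
  obtain f :: "'a set \<Rightarrow> nat" where f: "inj_on f BB" using BB(1) by (auto simp: countable_def)
  define c where "c P = f ` {b\<in>BB. b \<inter> P = {}}" for P
  have rec: "P = - (\<Union>{b\<in>BB. b \<inter> P = {}})" if cP: "closed P" for P
  proof
    show "P \<subseteq> - \<Union> {b \<in> BB. b \<inter> P = {}}" by blast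
    show "- \<Union> {b \<in> BB. b \<inter> P = {}} \<subseteq> P"
    proof
      fix x assume x: "x \<in> - \<Union> {b \<in> BB. b \<inter> P = {}}"
      show "x \<in> P"
      proof (rule ccontr)
        assume "x \<notin> P"
        then have xP: "x \<in> - P" by simp
        have oP: "open (- P)" using cP by (simp add: closed_def)
        obtain b where "b \<in> BB" "x \<in> b" "b \<subseteq> - P"
          using topological_basisE[OF BB(2) oP xP] by metis
        then show False using x by blast
      qed
    qed
  qed
  have "inj_on c {P. closed P}"
  proof (rule inj_onI)
    fix P Q assume PQ: "P \<in> {P. closed P}" "Q \<in> {P. closed P}" "c P = c Q"
    have "{b\<in>BB. b \<inter> P = {}} = {b\<in>BB. b \<inter> Q = {}}"
      using PQ(3) f unfolding c_def by (metis (no_types, lifting) inj_on_image_eq_iff mem_Collect_eq subsetI)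
    moreover have "P = - (\<Union>{b\<in>BB. b \<inter> P = {}})" using rec PQ(1) by simp
    moreover have "Q = - (\<Union>{b\<in>BB. b \<inter> Q = {}})" using rec PQ(2) by simp
    ultimately show "P = Q" by simp
  qed
  then have "{P::'a set. closed P} \<lesssim> (UNIV::nat set set)" unfolding lepoll_def by blast
  also have "\<dots> \<approx> (UNIV::real set)" by (rule nat_sets_eqpoll_reals)
  finally show ?thesis .
qed





lemma dist2: "dist (x::real^2) y = sqrt ((x$1 - y$1)^2 + (x$2 - y$2)^2)"
  by (simp add: dist_norm norm_vec_def L2_set_def UNIV_2)

definition third :: "pt \<Rightarrow> pt \<Rightarrow> bool \<Rightarrow> pt" where
  "third a b s = (let c = (if s then sqrt 3 / 2 else - (sqrt 3 / 2)) in
     vector [(a$1 + b$1)/2 - c * (b$2 - a$2), (a$2 + b$2)/2 + c * (b$1 - a$1)])"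

lemma third_lemma:
  assumes "dist a b = 1" "dist z a = 1" "dist z b = 1"
  shows "\<exists>s. z = third a b s"
proof -
  define d1 where "d1 = b$1 - a$1"
  define d2 where "d2 = b$2 - a$2"
  define u1 where "u1 = z$1 - (a$1 + b$1)/2"
  define u2 where "u2 = z$2 - (a$2 + b$2)/2"
  have e1: "(a$1 - b$1)^2 + (a$2 - b$2)^2 = 1" using assms(1) by (simp add: dist2)
  have e2: "(z$1 - a$1)^2 + (z$2 - a$2)^2 = 1" using assms(2) by (simp add: dist2)
  have e3: "(z$1 - b$1)^2 + (z$2 - b$2)^2 = 1" using assms(3) by (simp add: dist2)
  have dd: "d1^2 + d2^2 = 1" using e1 unfolding d1_def d2_def by (simp add: power2_commute)
  have ud: "u1 * d1 + u2 * d2 = 0" using e2 e3 unfolding u1_def u2_def d1_def d2_def by algebra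
  have uu: "u1^2 + u2^2 = 3/4" using e1 e2 e3 unfolding u1_def u2_def by algebra
  define c where "c = u2 * d1 - u1 * d2"
  have h1: "u1 = - c * d2" using dd ud unfolding c_def by algebra
  have h2: "u2 = c * d1" using dd ud unfolding c_def by algebra
  have "c^2 = 3/4" using dd ud uu unfolding c_def by algebra
  moreover have "(sqrt 3 / 2)^2 = (3/4::real)" by (simp add: power_divide)
  ultimately have "c = sqrt 3 / 2 \<or> c = - (sqrt 3 / 2)" by (metis power2_eq_iff)
  then obtain s where cs: "c = (if s then sqrt 3 / 2 else - (sqrt 3 / 2))" by (metis (full_types))
  have "z = third a b s"
    unfolding third_def Let_def cs[symmetric]
    using h1 h2 unfolding u1_def u2_def d1_def d2_def
    by (simp add: vec_eq_iff forall_2 algebra_simps)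
  then show ?thesis by blast
qed

definition Tri :: "pt set \<Rightarrow> pt set" where
  "Tri X = {z. \<exists>a\<in>X. \<exists>b\<in>X. dist a b = 1 \<and> dist z a = 1 \<and> dist z b = 1}"

lemma Tri_sub: "Tri X \<subseteq> (\<lambda>(a,b,s). third a b s) ` (X \<times> X \<times> UNIV)"
proof
  fix z assume "z \<in> Tri X"
  then obtain a b where ab: "a \<in> X" "b \<in> X" "dist a b = 1" "dist z a = 1" "dist z b = 1"
    by (auto simp: Tri_def)
  then obtain s where "z = third a b s" using third_lemma by blast
  then show "z \<in> (\<lambda>(a,b,s). third a b s) ` (X \<times> X \<times> UNIV)" using ab by force
qed

lemma sm_img: "|A| <o |C| \<Longrightarrow> |f ` A| <o |C|"
  by (metis card_of_image ordLeq_ordLess_trans)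

lemma sm_sub: "A \<subseteq> B \<Longrightarrow> |B| <o |C| \<Longrightarrow> |A| <o |C|"
  by (metis card_of_mono1 ordLeq_ordLess_trans)

lemma sm_fin: "finite A \<Longrightarrow> \<not> finite C \<Longrightarrow> |A| <o |C|"
  by (rule finite_ordLess_infinite[OF card_of_Well_order card_of_Well_order]) (simp_all add: Field_card_of)

lemma sm_prod:
  assumes C: "\<not> finite C" and A: "|A| <o |C|"
  shows "|A \<times> (A \<times> (UNIV::bool set))| <o |C|"
proof (cases "finite A")
  case True then show ?thesis by (intro sm_fin C) simp
next
  case False
  have "|UNIV::bool set| \<le>o |A|" using sm_fin[OF _ False, of "UNIV::bool set"] ordLess_imp_ordLeq by auto
  then have i1: "|A \<times> (UNIV::bool set)| =o |A|" using card_of_Times_infinite[OF False] by blast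
  have ne: "A \<times> (UNIV::bool set) \<noteq> {}" using False by auto
  have "|A \<times> (A \<times> (UNIV::bool set))| =o |A|"
    using card_of_Times_infinite[OF False ne ordIso_imp_ordLeq[OF i1]] by blast
  then show ?thesis using A ordIso_ordLess_trans by blast
qed

lemma sm_Tri:
  assumes C: "\<not> finite C" and A: "|X| <o |C|"
  shows "|Tri X| <o |C|"
  by (rule sm_sub[OF Tri_sub sm_img[OF sm_prod[OF C A]]])

lemma construction:
  fixes FF :: "pt set set"
  assumes small: "|FF| \<le>o |UNIV::real set|" and big: "\<And>F. F \<in> FF \<Longrightarrow> |UNIV::real set| \<le>o |F|"
  shows "\<exists>B. (\<forall>F\<in>FF. F \<inter> B \<noteq> {} \<and> F - B \<noteq> {}) \<and>
             (\<forall>a\<in>B. \<forall>b\<in>B. \<forall>c\<in>B. \<not> (dist a b = 1 \<and> dist a c = 1 \<and> dist b c = 1))"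
proof -
  have inf: "\<not> finite (UNIV::real set)" by (rule infinite_UNIV_char_0)
  define r where "r = |FF|"
  have wo: "wo_rel r" unfolding wo_rel_def r_def by (rule card_of_Well_order)
  have Cr: "Card_order r" unfolding r_def by (rule card_of_Card_order)
  have Fr: "Field r = FF" unfolding r_def by (rule Field_card_of)
  have us: "|underS r F| <o |UNIV::real set|" if "F \<in> FF" for F
    using card_of_underS[OF Cr, of F] that Fr small ordLess_ordLeq_trans unfolding r_def by metis
  define cond where "cond P F p \<longleftrightarrow> fst p \<in> F \<and> snd p \<in> F \<and> fst p \<noteq> snd p \<and> fst p \<notin> snd ` P
      \<and> fst p \<notin> Tri (fst ` P) \<and> snd p \<notin> fst ` P" for P :: "(pt \<times> pt) set" and F and p
  have ex: "\<exists>p. cond P F p" if F: "F \<in> FF" and P: "|P| <o |UNIV::real set|" for P F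
  proof -
    have sX: "|fst ` P| <o |UNIV::real set|" and sY: "|snd ` P| <o |UNIV::real set|"
      using sm_img[OF P] by auto
    have s1: "|snd ` P \<union> Tri (fst ` P)| <o |UNIV::real set|"
      using card_of_Un_ordLess_infinite[OF inf sY sm_Tri[OF inf sX]] .
    have "\<not> F \<subseteq> snd ` P \<union> Tri (fst ` P)"
    proof
      assume "F \<subseteq> snd ` P \<union> Tri (fst ` P)"
      then have "|F| <o |UNIV::real set|" using sm_sub s1 by blast
      then show False using big[OF F] not_ordLess_ordLeq by blast
    qed
    then obtain x where x: "x \<in> F" "x \<notin> snd ` P" "x \<notin> Tri (fst ` P)" by blast
    have s2: "|fst ` P \<union> {x}| <o |UNIV::real set|"
    proof -
      have fx: "|{x}| <o |UNIV::real set|" by (rule sm_fin[OF _ inf]) simp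
      show ?thesis using card_of_Un_ordLess_infinite[OF inf sX fx] .
    qed
    have "\<not> F \<subseteq> fst ` P \<union> {x}"
    proof
      assume "F \<subseteq> fst ` P \<union> {x}"
      then have "|F| <o |UNIV::real set|" using sm_sub s2 by blast
      then show False using big[OF F] not_ordLess_ordLeq by blast
    qed
    then obtain y where y: "y \<in> F" "y \<notin> fst ` P" "y \<noteq> x" by blast
    have "cond P F (x, y)" unfolding cond_def using x y by auto
    then show ?thesis by blast
  qed
  define H where "H f F = (SOME p. cond (f ` underS r F) F p)" for f :: "pt set \<Rightarrow> pt \<times> pt" and F
  define f where "f = wo_rel.worec r H"
  have adm: "wo_rel.adm_wo r H"
    unfolding wo_rel.adm_wo_def[OF wo]
  proof (intro allI impI)
    fix f g :: "pt set \<Rightarrow> pt \<times> pt" and x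
    assume "\<forall>y\<in>underS r x. f y = g y"
    then have "f ` underS r x = g ` underS r x" by (intro image_cong) auto
    then show "H f x = H g x" by (simp add: H_def)
  qed
  have fxp: "f = H f" unfolding f_def by (rule wo_rel.worec_fixpoint[OF wo adm])
  have cf: "cond (f ` underS r F) F (f F)" if "F \<in> FF" for F
  proof -
    have "\<exists>p. cond (f ` underS r F) F p" using ex[OF that sm_img[OF us[OF that]]] .
    then have "cond (f ` underS r F) F (H f F)" unfolding H_def by (rule someI_ex)
    then show ?thesis using fxp by metis
  qed
  have tot: "G \<in> underS r F \<or> F \<in> underS r G" if "F \<in> FF" "G \<in> FF" "F \<noteq> G" for F G
    using wo_rel.TOTALS[OF wo] that Fr unfolding underS_def by auto
  have trn: "G \<in> underS r K" if "G \<in> underS r F" "F \<in> underS r K" for F G K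
  proof -
    have "(G, F) \<in> r" "(F, K) \<in> r" "G \<noteq> F" "F \<noteq> K" using that by (auto simp: underS_def)
    moreover have "trans r" "antisym r" using wo_rel.TRANS[OF wo] wo_rel.ANTISYM[OF wo] by auto
    ultimately have "(G, K) \<in> r" "G \<noteq> K" unfolding trans_def antisym_def by blast+
    then show ?thesis by (simp add: underS_def)
  qed
  have irr: "F \<notin> underS r F" for F by (simp add: underS_def)
  define B where "B = (\<lambda>F. fst (f F)) ` FF"
  have part1: "\<forall>F\<in>FF. F \<inter> B \<noteq> {} \<and> F - B \<noteq> {}"
  proof
    fix F assume F: "F \<in> FF"
    have c: "cond (f ` underS r F) F (f F)" using cf[OF F] .
    have "fst (f F) \<in> F \<inter> B" using c F by (auto simp: cond_def B_def)
    moreover have "snd (f F) \<notin> B"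
    proof
      assume "snd (f F) \<in> B"
      then obtain G where G: "G \<in> FF" "snd (f F) = fst (f G)" by (auto simp: B_def)
      have cG: "cond (f ` underS r G) G (f G)" using cf[OF G(1)] .
      show False
      proof (cases "G = F")
        case True then show False using c G(2) by (simp add: cond_def)
      next
        case False
        then have "G \<in> underS r F \<or> F \<in> underS r G" using tot F G(1) by blast
        then show False
        proof
          assume "G \<in> underS r F"
          then have "fst (f G) \<in> fst ` f ` underS r F" by blast
          then show False using c G(2) by (auto simp: cond_def)
        next
          assume "F \<in> underS r G"
          then have "snd (f F) \<in> snd ` f ` underS r G" by blast
          then show False using cG G(2) by (auto simp: cond_def)
        qed
      qed
    qed
    moreover have "snd (f F) \<in> F" using c by (simp add: cond_def)
    ultimately show "F \<inter> B \<noteq> {} \<and> F - B \<noteq> {}" by blast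
  qed
  define x where "x F = fst (f F)" for F
  have key: "False" if "G1 \<in> underS r G3" "G2 \<in> underS r G3" "G3 \<in> FF"
     "dist (x G1) (x G2) = 1" "dist (x G3) (x G1) = 1" "dist (x G3) (x G2) = 1" for G1 G2 G3
  proof -
    have "x G3 \<in> Tri (fst ` f ` underS r G3)"
      unfolding Tri_def using that(1,2,4,5,6) by (auto simp: x_def)
    then show False using cf[OF that(3)] by (simp add: cond_def x_def)
  qed
  have part2: "\<forall>a\<in>B. \<forall>b\<in>B. \<forall>c\<in>B. \<not> (dist a b = 1 \<and> dist a c = 1 \<and> dist b c = 1)"
  proof (intro ballI notI)
    fix a b c assume abc: "a \<in> B" "b \<in> B" "c \<in> B" "dist a b = 1 \<and> dist a c = 1 \<and> dist b c = 1"
    then obtain G1 G2 G3 where G: "G1 \<in> FF" "G2 \<in> FF" "G3 \<in> FF" "a = x G1" "b = x G2" "c = x G3"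
      by (auto simp: B_def x_def)
    have d: "dist (x G1) (x G2) = 1" "dist (x G1) (x G3) = 1" "dist (x G2) (x G3) = 1"
            "dist (x G2) (x G1) = 1" "dist (x G3) (x G1) = 1" "dist (x G3) (x G2) = 1"
      using abc(4) G by (auto simp: dist_commute)
    then have ne: "G1 \<noteq> G2" "G1 \<noteq> G3" "G2 \<noteq> G3" by auto
    have t12: "G1 \<in> underS r G2 \<or> G2 \<in> underS r G1" using tot[OF G(1) G(2) ne(1)] by blast
    have t13: "G1 \<in> underS r G3 \<or> G3 \<in> underS r G1" using tot[OF G(1) G(3) ne(2)] by blast
    have t23: "G2 \<in> underS r G3 \<or> G3 \<in> underS r G2" using tot[OF G(2) G(3) ne(3)] by blast
    have k3: False if "G1 \<in> underS r G3" "G2 \<in> underS r G3" using key[of G1 G3 G2] that G(3) d by blast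
    have k2: False if "G1 \<in> underS r G2" "G3 \<in> underS r G2" using key[of G1 G2 G3] that G(2) d by blast
    have k1: False if "G2 \<in> underS r G1" "G3 \<in> underS r G1" using key[of G2 G1 G3] that G(1) d by blast
    show False
    proof (cases "G1 \<in> underS r G2")
      case True
      show False using t23
      proof
        assume "G2 \<in> underS r G3" then show False using k3 True trn by blast
      next
        assume "G3 \<in> underS r G2" then show False using k2 True by blast
      qed
    next
      case False
      then have h: "G2 \<in> underS r G1" using t12 by blast
      show False using t13
      proof
        assume "G1 \<in> underS r G3" then show False using k3 h trn by blast
      next
        assume "G3 \<in> underS r G1" then show False using k1 h by blast
      qed
    qed
  qed
  show ?thesis using part1 part2 by blast
qed


definition fam :: "pt set set" where
  "fam = {fst ` P | P :: (pt \<times> sq) set. closed P \<and> inj_on fst P \<and> (UNIV::real set) \<lesssim> P}"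

lemma fam_small: "|fam| \<le>o |UNIV::real set|"
proof -
  have "fam \<subseteq> (\<lambda>P. fst ` P) ` {P :: (pt \<times> sq) set. closed P}" by (auto simp: fam_def)
  then have "|fam| \<le>o |(\<lambda>P. fst ` P) ` {P :: (pt \<times> sq) set. closed P}|" by (rule card_of_mono1)
  also have "|(\<lambda>P. fst ` P) ` {P :: (pt \<times> sq) set. closed P}| \<le>o |{P :: (pt \<times> sq) set. closed P}|"
    by (rule card_of_image)
  also have "|{P :: (pt \<times> sq) set. closed P}| \<le>o |UNIV::real set|"
    using closed_sets_lepoll[where 'a="pt \<times> sq"] unfolding lepoll_def card_of_ordLeq[symmetric] .
  finally show ?thesis .
qed

lemma fam_big: "F \<in> fam \<Longrightarrow> |UNIV::real set| \<le>o |F|"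
proof -
  assume "F \<in> fam"
  then obtain P :: "(pt \<times> sq) set" where P: "F = fst ` P" "inj_on fst P" "(UNIV::real set) \<lesssim> P"
    by (auto simp: fam_def)
  have "P \<lesssim> F" unfolding lepoll_def using P by blast
  then have "(UNIV::real set) \<lesssim> F" using P(3) lepoll_trans by blast
  then show ?thesis unfolding lepoll_def card_of_ordLeq[symmetric] .
qed

lemma inj_fst_gr: "inj_on fst (gr g)"
  by (auto simp: gr_def inj_on_def)

lemma borel_contains_fam:
  assumes Z: "Z \<in> sets borel" "uncountable Z"
  shows "\<exists>F\<in>fam. F \<subseteq> Z"
proof -
  obtain g where g: "closed (gr g)" "opn g (- Z)" using good_borel[OF Z(1)] by (auto simp: good_def)
  obtain W where W: "open W" "- Z = {x. (x, g x) \<in> W}" using g(2) by (auto simp: opn_def)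
  define S where "S = gr g \<inter> - W"
  have cS: "closed S" unfolding S_def using g(1) W(1) by (intro closed_Int) (auto simp: closed_def)
  have fS: "fst ` S = Z"
  proof
    show "fst ` S \<subseteq> Z" using W(2) by (auto simp: S_def gr_def)
    show "Z \<subseteq> fst ` S"
    proof
      fix z assume "z \<in> Z"
      then have "(z, g z) \<in> S" using W(2) by (auto simp: S_def gr_def)
      then show "z \<in> fst ` S" by force
    qed
  qed
  have "uncountable S"
  proof
    assume "countable S" then have "countable (fst ` S)" by simp
    then show False using fS Z(2) by simp
  qed
  then obtain P where P: "P \<subseteq> S" "closed P" "(UNIV::real set) \<lesssim> P" using perfect_sub[OF cS] by blast
  have "inj_on fst P" using inj_fst_gr P(1) unfolding S_def by (meson Int_subset_iff inj_on_subset)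
  then have "fst ` P \<in> fam" using P by (auto simp: fam_def)
  moreover have "fst ` P \<subseteq> Z" using P(1) fS by blast
  ultimately show ?thesis by blast
qed

theorem mainTheorem17:
  shows "\<exists>B :: (real^2) set. bernstein_set B \<and> \<not> three_I_covering B"
proof -
  obtain B where B1: "\<forall>F\<in>fam. F \<inter> B \<noteq> {} \<and> F - B \<noteq> {}"
    and B2: "\<forall>a\<in>B. \<forall>b\<in>B. \<forall>c\<in>B. \<not> (dist a b = 1 \<and> dist a c = 1 \<and> dist b c = 1)"
    using construction[OF fam_small fam_big] by blast
  have "bernstein_set B"
    unfolding bernstein_set_def
  proof (intro allI impI)
    fix Z :: "pt set" assume "Z \<in> sets borel \<and> uncountable Z"
    then obtain F where "F \<in> fam" "F \<subseteq> Z" using borel_contains_fam by blast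
    then show "Z \<inter> B \<noteq> {} \<and> Z - B \<noteq> {}" using B1 by blast
  qed
  moreover have "\<not> three_I_covering B"
  proof
    assume cov: "three_I_covering B"
    define c1 :: pt where "c1 = vector [0, 0]"
    define c2 :: pt where "c2 = vector [1, 0]"
    define c3 :: pt where "c3 = vector [1/2, sqrt 3 / 2]"
    have s3: "(sqrt 3 / 2)^2 = (3/4::real)" by (simp add: power_divide)
    have d12: "dist c1 c2 = 1" by (simp add: dist2 c1_def c2_def)
    have d13: "dist c1 c3 = 1" by (simp add: dist2 c1_def c3_def s3 power_divide)
    have d23: "dist c2 c3 = 1"
    proof -
      have "(1 - 1/2)^2 + (0 - sqrt 3 / 2)^2 = (1::real)" using s3 by (simp add: power2_eq_square)
      then show ?thesis by (simp add: dist2 c2_def c3_def)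
    qed
    have ne: "c1 \<noteq> c2" "c1 \<noteq> c3" "c2 \<noteq> c3" using d12 d13 d23 by auto
    have "card {c1, c2, c3} = 3" using ne by simp
    then obtain \<phi> where \<phi>: "plane_isometry \<phi>" "\<phi> ` {c1, c2, c3} \<subseteq> B"
      using cov unfolding three_I_covering_def by blast
    have dd: "dist (\<phi> x) (\<phi> y) = dist x y" for x y using \<phi>(1) by (simp add: plane_isometry_def)
    have "\<phi> c1 \<in> B" "\<phi> c2 \<in> B" "\<phi> c3 \<in> B" using \<phi>(2) by auto
    then show False using B2 dd d12 d13 d23 by metis
  qed
  ultimately show ?thesis by blast
qed

end
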